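(* Let $W$ be a channel with finite input alphabet $\mathcal X$ and finite output alphabet $\mathcal Y$, let $P$ be an input distribution with $I(P,W)=C_W$ and $V_{P,W}>0$, and let $R_2<0$. Then \[ \lim_{n\to\infty}\ n\min_{0\le s\le1}\Big(C_Ws+\frac{R_2}{\sqrt n}s+\psi_P(s)\Big)=-\frac{R_2^2}{2V_{P,W}}. \]
   Context: Logs natural. $W_P=\sum_xP(x)W_x$, $D$ is relative entropy, $I(P,W)=\sum_xP(x)D(W_x\|W_P)$, $C_W=\max_PI(P,W)$, $V_{P,W}=\sum_xP(x)\sum_yW_x(y)\big(\log\frac{W_x(y)}{W_P(y)}-D(W_x\|W_P)\big)^2$, and the Gallager function is $\psi_P(s)=\log\sum_y\big(\sum_xP(x)W_x(y)^{1/(1+s)}\big)^{1+s}$ for $s\ge0$. *)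

theory Defs
  imports "HOL-Analysis.Analysis"
begin

definition channel :: "('x::finite \<Rightarrow> 'y::finite \<Rightarrow> real) \<Rightarrow> bool" where
  "channel W \<longleftrightarrow> (\<forall>x y. 0 \<le> W x y) \<and> (\<forall>x. (\<Sum>y\<in>UNIV. W x y) = 1)"

definition input_distr :: "('x::finite \<Rightarrow> real) \<Rightarrow> bool" where
  "input_distr P \<longleftrightarrow> (\<forall>x. 0 \<le> P x) \<and> (\<Sum>x\<in>UNIV. P x) = 1"

definition outdist :: "('x::finite \<Rightarrow> real) \<Rightarrow> ('x \<Rightarrow> 'y \<Rightarrow> real) \<Rightarrow> 'y \<Rightarrow> real" where
  "outdist P W y = (\<Sum>x\<in>UNIV. P x * W x y)"

definition relent :: "('y::finite \<Rightarrow> real) \<Rightarrow> ('y \<Rightarrow> real) \<Rightarrow> real" where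
  "relent p q = (\<Sum>y\<in>{y. 0 < p y}. p y * ln (p y / q y))"

definition mutinf :: "('x::finite \<Rightarrow> real) \<Rightarrow> ('x \<Rightarrow> 'y::finite \<Rightarrow> real) \<Rightarrow> real" where
  "mutinf P W = (\<Sum>x\<in>UNIV. P x * relent (W x) (outdist P W))"

definition capacity :: "('x::finite \<Rightarrow> 'y::finite \<Rightarrow> real) \<Rightarrow> real" where
  "capacity W = Sup {mutinf P W | P. input_distr P}"

definition dispersion :: "('x::finite \<Rightarrow> real) \<Rightarrow> ('x \<Rightarrow> 'y::finite \<Rightarrow> real) \<Rightarrow> real" where
  "dispersion P W = (\<Sum>x\<in>UNIV. P x * (\<Sum>y\<in>{y. 0 < W x y}.
      W x y * (ln (W x y / outdist P W y) - relent (W x) (outdist P W))\<^sup>2))"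

definition gallager :: "('x::finite \<Rightarrow> real) \<Rightarrow> ('x \<Rightarrow> 'y::finite \<Rightarrow> real) \<Rightarrow> real \<Rightarrow> real" where
  "gallager P W s = ln (\<Sum>y\<in>UNIV. (\<Sum>x\<in>UNIV. P x * W x y powr (1 / (1 + s))) powr (1 + s))"

end

theory Submission
  imports Defs
begin


definition Sx :: "'i set \<Rightarrow> ('i \<Rightarrow> real) \<Rightarrow> ('i \<Rightarrow> real) \<Rightarrow> real" where
  "Sx A c k = (\<Sum>i\<in>A. c i * exp (k i))"
definition Mx :: "'i set \<Rightarrow> ('i \<Rightarrow> real) \<Rightarrow> ('i \<Rightarrow> real) \<Rightarrow> ('i \<Rightarrow> real) \<Rightarrow> real" where
  "Mx A c k k1 = (\<Sum>i\<in>A. c i * exp (k i) * k1 i) / Sx A c k"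
definition Vx :: "'i set \<Rightarrow> ('i \<Rightarrow> real) \<Rightarrow> ('i \<Rightarrow> real) \<Rightarrow> ('i \<Rightarrow> real) \<Rightarrow> ('i \<Rightarrow> real) \<Rightarrow> real" where
  "Vx A c k k1 k2 = (\<Sum>i\<in>A. c i * exp (k i) * (k2 i + (k1 i)\<^sup>2)) / Sx A c k - (Mx A c k k1)\<^sup>2"

lemma Sx_pos:
  assumes "finite A" "A \<noteq> {}" "\<And>i. i\<in>A \<Longrightarrow> 0 < c i"
  shows "0 < Sx A c k"
  unfolding Sx_def using assms by (intro sum_pos) auto

lemma lse_deriv:
  fixes k :: "'i \<Rightarrow> real \<Rightarrow> real"
  assumes fin: "finite A" and ne: "A \<noteq> {}" and cpos: "\<And>i. i\<in>A \<Longrightarrow> 0 < c i"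
    and dk: "\<And>i. i\<in>A \<Longrightarrow> (k i has_real_derivative k1 i) (at s)"
  shows "((\<lambda>s. ln (Sx A c (\<lambda>i. k i s))) has_real_derivative Mx A c (\<lambda>i. k i s) k1) (at s)"
proof -
  have dS: "((\<lambda>s. Sx A c (\<lambda>i. k i s)) has_real_derivative (\<Sum>i\<in>A. c i * exp (k i s) * k1 i)) (at s)"
    unfolding Sx_def
    by (rule DERIV_sum) (auto intro!: derivative_eq_intros dk)
  have p: "0 < Sx A c (\<lambda>i. k i s)" using Sx_pos[OF fin ne cpos] .
  show ?thesis
    using DERIV_chain2[OF DERIV_ln_divide[OF p] dS] unfolding Mx_def by simp
qed

lemma lse_mean_deriv:
  fixes k k1 :: "'i \<Rightarrow> real \<Rightarrow> real"
  assumes fin: "finite A" and ne: "A \<noteq> {}" and cpos: "\<And>i. i\<in>A \<Longrightarrow> 0 < c i"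
    and dk: "\<And>i. i\<in>A \<Longrightarrow> (k i has_real_derivative k1 i s) (at s)"
    and dk1: "\<And>i. i\<in>A \<Longrightarrow> (k1 i has_real_derivative k2 i) (at s)"
  shows "((\<lambda>s. Mx A c (\<lambda>i. k i s) (\<lambda>i. k1 i s)) has_real_derivative Vx A c (\<lambda>i. k i s) (\<lambda>i. k1 i s) k2) (at s)"
proof -
  have dS: "((\<lambda>s. Sx A c (\<lambda>i. k i s)) has_real_derivative (\<Sum>i\<in>A. c i * exp (k i s) * k1 i s)) (at s)"
    unfolding Sx_def
    by (rule DERIV_sum) (auto intro!: derivative_eq_intros dk)
  have dN: "((\<lambda>s. \<Sum>i\<in>A. c i * exp (k i s) * k1 i s) has_real_derivative
      (\<Sum>i\<in>A. c i * exp (k i s) * (k2 i + (k1 i s)\<^sup>2))) (at s)"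
    by (rule DERIV_sum) (auto intro!: derivative_eq_intros dk dk1 simp: power2_eq_square algebra_simps)
  have p: "0 < Sx A c (\<lambda>i. k i s)" using Sx_pos[OF fin ne cpos] .
  have "((\<lambda>s. (\<Sum>i\<in>A. c i * exp (k i s) * k1 i s) / Sx A c (\<lambda>i. k i s)) has_real_derivative
     ((\<Sum>i\<in>A. c i * exp (k i s) * (k2 i + (k1 i s)\<^sup>2)) * Sx A c (\<lambda>i. k i s)
       - (\<Sum>i\<in>A. c i * exp (k i s) * k1 i s) * (\<Sum>i\<in>A. c i * exp (k i s) * k1 i s))
       / (Sx A c (\<lambda>i. k i s) * Sx A c (\<lambda>i. k i s))) (at s)"
    using DERIV_divide[OF dN dS] p by simp
  moreover have "((\<Sum>i\<in>A. c i * exp (k i s) * (k2 i + (k1 i s)\<^sup>2)) * Sx A c (\<lambda>i. k i s)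
       - (\<Sum>i\<in>A. c i * exp (k i s) * k1 i s) * (\<Sum>i\<in>A. c i * exp (k i s) * k1 i s))
       / (Sx A c (\<lambda>i. k i s) * Sx A c (\<lambda>i. k i s)) = Vx A c (\<lambda>i. k i s) (\<lambda>i. k1 i s) k2"
    unfolding Vx_def Mx_def using p by (simp add: field_simps power2_eq_square)
  ultimately show ?thesis unfolding Mx_def by simp
qed

lemma Vx_nonneg:
  assumes fin: "finite A" and ne: "A \<noteq> {}" and cpos: "\<And>i. i\<in>A \<Longrightarrow> 0 < c i"
    and k2: "\<And>i. i\<in>A \<Longrightarrow> 0 \<le> k2 i"
  shows "0 \<le> Vx A c k k1 k2"
proof -
  define S where "S = Sx A c k"
  define m where "m = Mx A c k k1"
  have p: "0 < S" unfolding S_def using Sx_pos[OF fin ne cpos] .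
  have Sdef: "S = (\<Sum>i\<in>A. c i * exp (k i))" unfolding S_def Sx_def ..
  have N: "(\<Sum>i\<in>A. c i * exp (k i) * k1 i) = m * S" unfolding m_def Mx_def S_def using p S_def by simp
  have "0 \<le> (\<Sum>i\<in>A. c i * exp (k i) * (k1 i - m)\<^sup>2)"
    using cpos by (intro sum_nonneg mult_nonneg_nonneg) (auto intro: less_imp_le)
  also have "\<dots> = (\<Sum>i\<in>A. c i * exp (k i) * (k1 i)\<^sup>2) - 2 * m * (\<Sum>i\<in>A. c i * exp (k i) * k1 i) + m\<^sup>2 * S"
    by (simp add: Sdef power2_eq_square algebra_simps sum.distrib sum_subtractf sum_distrib_left)
  also have "\<dots> = (\<Sum>i\<in>A. c i * exp (k i) * (k1 i)\<^sup>2) - m\<^sup>2 * S"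
    using N by (simp add: power2_eq_square)
  finally have A: "m\<^sup>2 * S \<le> (\<Sum>i\<in>A. c i * exp (k i) * (k1 i)\<^sup>2)" by simp
  have B: "(\<Sum>i\<in>A. c i * exp (k i) * (k1 i)\<^sup>2) \<le> (\<Sum>i\<in>A. c i * exp (k i) * (k2 i + (k1 i)\<^sup>2))"
    using cpos k2 by (intro sum_mono) (auto intro!: mult_left_mono less_imp_le)
  have "m\<^sup>2 \<le> (\<Sum>i\<in>A. c i * exp (k i) * (k2 i + (k1 i)\<^sup>2)) / S"
    using A B p by (simp add: le_divide_eq)
  then show ?thesis unfolding Vx_def m_def S_def by simp
qed



lemma mono_by_deriv:
  fixes F F' :: "real \<Rightarrow> real"
  assumes "a \<le> b" and "\<And>x. a \<le> x \<Longrightarrow> x \<le> b \<Longrightarrow> (F has_real_derivative F' x) (at x) \<and> 0 \<le> F' x"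
  shows "F a \<le> F b"
proof (rule DERIV_nonneg_imp_increasing_open[OF assms(1)])
  show "\<And>x. a < x \<Longrightarrow> x < b \<Longrightarrow> \<exists>y. (F has_real_derivative y) (at x) \<and> 0 \<le> y"
    using assms(2) by (meson less_imp_le)
  show "continuous_on {a..b} F"
    using assms(2) by (intro continuous_at_imp_continuous_on) (meson DERIV_isCont atLeastAtMost_iff)
qed

lemma abstract_bounds:
  fixes g g1 f2 :: "real \<Rightarrow> real"
  assumes g0: "g 0 = 0" and dg: "\<And>s. s > -1 \<Longrightarrow> (g has_real_derivative g1 s) (at s)"
    and dg1: "\<And>s. s > -1 \<Longrightarrow> (g1 has_real_derivative f2 s) (at s)"
    and f2nn: "\<And>s. s > -1 \<Longrightarrow> 0 \<le> f2 s" and g10: "g1 0 = - C" and f20: "f2 0 = U"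
    and U: "U > 0" and R: "R < 0" and eta: "0 < \<eta>" "\<eta> < U"
  shows "\<forall>\<^sub>F n in sequentially.
     - (R\<^sup>2 / (2 * (U - \<eta>))) \<le> real n * (INF s\<in>{0..1::real}. C * s + R / sqrt (real n) * s + g s) \<and>
     real n * (INF s\<in>{0..1::real}. C * s + R / sqrt (real n) * s + g s) \<le> - (R\<^sup>2 / (2 * (U + \<eta>)))"
proof -
  define f where "f s = C * s + g s" for s
  define f1 where "f1 s = C + g1 s" for s
  have f0: "f 0 = 0" using g0 by (simp add: f_def)
  have df: "(f has_real_derivative f1 s) (at s)" if "s > -1" for s
    unfolding f_def f1_def using dg[OF that] by (auto intro!: derivative_eq_intros)
  have df1: "(f1 has_real_derivative f2 s) (at s)" if "s > -1" for s
    unfolding f1_def using dg1[OF that] by (auto intro!: derivative_eq_intros)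
  have f10: "f1 0 = 0" using g10 by (simp add: f1_def)
  have "((\<lambda>y. (f1 y - f1 0) / (y - 0)) \<longlongrightarrow> U) (at 0)"
    using df1[of 0] f20 by (simp add: has_field_derivative_iff)
  then have "\<forall>\<^sub>F y in at 0. dist ((f1 y - f1 0) / (y - 0)) U < \<eta>"
    using eta by (simp add: tendsto_iff)
  then obtain d where d: "d > 0" and dd: "\<And>y. y \<noteq> 0 \<Longrightarrow> dist y 0 < d \<Longrightarrow> dist ((f1 y - f1 0) / (y - 0)) U < \<eta>"
    unfolding eventually_at by blast
  define \<epsilon> where "\<epsilon> = min (d/2) (1/2)"
  have ep: "0 < \<epsilon>" "\<epsilon> < d" "\<epsilon> \<le> 1/2" using d by (auto simp: \<epsilon>_def)
  have f1b: "(U - \<eta>) * t \<le> f1 t \<and> f1 t \<le> (U + \<eta>) * t" if "0 \<le> t" "t \<le> \<epsilon>" for t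
  proof (cases "t = 0")
    case True then show ?thesis using f10 by simp
  next
    case False
    then have tp: "t > 0" using that by simp
    have "\<bar>f1 t / t - U\<bar> < \<eta>" using dd[of t] False that ep f10 by (simp add: dist_real_def)
    then have "U - \<eta> < f1 t / t" "f1 t / t < U + \<eta>" by auto
    then show ?thesis using tp by (simp add: field_simps)
  qed
  have flow: "(U - \<eta>) * s\<^sup>2 / 2 \<le> f s" if "0 \<le> s" "s \<le> \<epsilon>" for s
  proof -
    have "(\<lambda>t. f t - (U - \<eta>) * t\<^sup>2 / 2) 0 \<le> (\<lambda>t. f t - (U - \<eta>) * t\<^sup>2 / 2) s"
    proof (rule mono_by_deriv[OF that(1)])
      fix x assume x: "0 \<le> x" "x \<le> s"
      show "((\<lambda>t. f t - (U - \<eta>) * t\<^sup>2 / 2) has_real_derivative f1 x - (U - \<eta>) * x) (at x) \<and> 0 \<le> f1 x - (U - \<eta>) * x"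
        using df[of x] f1b[of x] x that by (auto intro!: derivative_eq_intros)
    qed
    then show ?thesis using f0 by simp
  qed
  have fup: "f s \<le> (U + \<eta>) * s\<^sup>2 / 2" if "0 \<le> s" "s \<le> \<epsilon>" for s
  proof -
    have "(\<lambda>t. (U + \<eta>) * t\<^sup>2 / 2 - f t) 0 \<le> (\<lambda>t. (U + \<eta>) * t\<^sup>2 / 2 - f t) s"
    proof (rule mono_by_deriv[OF that(1)])
      fix x assume x: "0 \<le> x" "x \<le> s"
      show "((\<lambda>t. (U + \<eta>) * t\<^sup>2 / 2 - f t) has_real_derivative (U + \<eta>) * x - f1 x) (at x) \<and> 0 \<le> (U + \<eta>) * x - f1 x"
        using df[of x] f1b[of x] x that by (auto intro!: derivative_eq_intros)
    qed
    then show ?thesis using f0 by simp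
  qed
  define c where "c = (U - \<eta>) * \<epsilon>\<^sup>2 / 2"
  have cpos: "c > 0" using ep eta unfolding c_def by simp
  have f1far: "f1 t \<ge> (U - \<eta>) * \<epsilon>" if "\<epsilon> \<le> t" for t
  proof -
    have "f1 \<epsilon> \<le> f1 t"
    proof (rule mono_by_deriv[OF that])
      fix x assume "\<epsilon> \<le> x" "x \<le> t"
      then show "(f1 has_real_derivative f2 x) (at x) \<and> 0 \<le> f2 x"
        using df1[of x] f2nn[of x] ep by auto
    qed
    then show ?thesis using f1b[of \<epsilon>] ep by simp
  qed
  have ffar: "f s \<ge> c" if "\<epsilon> \<le> s" for s
  proof -
    have "f \<epsilon> \<le> f s"
    proof (rule mono_by_deriv[OF that])
      fix x assume "\<epsilon> \<le> x" "x \<le> s"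
      then show "(f has_real_derivative f1 x) (at x) \<and> 0 \<le> f1 x"
        using df[of x] f1far[of x] ep eta by (auto intro: order_trans[rotated])
    qed
    then show ?thesis using flow[of \<epsilon>] ep unfolding c_def by simp
  qed
  define N0 where "N0 = max (- R / c) (- R / ((U + \<eta>) * \<epsilon>))"
  have ev: "\<forall>\<^sub>F n in sequentially. real n \<ge> 1 \<and> sqrt (real n) \<ge> N0"
  proof -
    have "\<forall>\<^sub>F n in sequentially. n \<ge> max 1 (nat \<lceil>N0\<^sup>2\<rceil>)" by (rule eventually_ge_at_top)
    then show ?thesis
    proof (rule eventually_mono)
      fix n assume n: "max 1 (nat \<lceil>N0\<^sup>2\<rceil>) \<le> n"
      then have "N0\<^sup>2 \<le> real n" by linarith
      then have "sqrt (N0\<^sup>2) \<le> sqrt (real n)" by (rule real_sqrt_le_mono)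
      then have "N0 \<le> sqrt (real n)" by (smt (verit) real_sqrt_abs)
      then show "real n \<ge> 1 \<and> sqrt (real n) \<ge> N0" using n by simp
    qed
  qed
  show ?thesis
    using ev
  proof (rule eventually_mono)
    fix n :: nat assume n: "real n \<ge> 1 \<and> sqrt (real n) \<ge> N0"
    define r where "r = R / sqrt (real n)"
    have sq: "sqrt (real n) > 0" using n by simp
    have r2: "r\<^sup>2 = R\<^sup>2 / real n" using n unfolding r_def by (simp add: power_divide)
    have rneg: "r < 0" using R sq unfolding r_def by (simp add: divide_neg_pos)
    have rc: "r \<ge> - c"
    proof -
      have "- R / c \<le> sqrt (real n)" using n unfolding N0_def by simp
      then have "- R \<le> c * sqrt (real n)" using pos_divide_le_eq[OF cpos, of "-R" "sqrt (real n)"] by (simp add: mult.commute)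
      then show ?thesis unfolding r_def using sq by (simp add: divide_le_eq le_divide_eq)
    qed
    have a0: "U - \<eta> \<noteq> 0" "U + \<eta> \<noteq> 0" "U*2 - \<eta>*2 \<noteq> 0" "U*2 + \<eta>*2 \<noteq> 0" using eta by auto
    define LB where "LB = - (r\<^sup>2 / (2 * (U - \<eta>)))"
    have LBn: "real n * LB = - (R\<^sup>2 / (2 * (U - \<eta>)))" unfolding LB_def r2 using n a0
      by (simp add: field_simps)
    have lb: "LB \<le> C * s + R / sqrt (real n) * s + g s" if s: "s \<in> {0..1}" for s
    proof -
      have e: "C * s + R / sqrt (real n) * s + g s = f s + r * s" unfolding f_def r_def by simp
      show ?thesis
      proof (cases "s \<le> \<epsilon>")
        case True
        have a: "U - \<eta> > 0" using eta by simp
        have "0 \<le> ((U - \<eta>) * s + r)\<^sup>2 / (2 * (U - \<eta>))" using a by simp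
        also have "\<dots> = (U - \<eta>) * s\<^sup>2 / 2 + r * s - LB" unfolding LB_def using a
          by (simp add: field_simps power2_eq_square)
        finally have "LB \<le> (U - \<eta>) * s\<^sup>2 / 2 + r * s" by simp
        then show ?thesis using flow[of s] True s e by simp
      next
        case False
        have "r * s \<ge> r" using rneg s by (simp add: mult_le_cancel_left1)
        then have "f s + r * s \<ge> 0" using ffar[of s] False rc by simp
        moreover have "LB \<le> 0" unfolding LB_def using eta by simp
        ultimately show ?thesis using e by simp
      qed
    qed
    have bdd: "bdd_below ((\<lambda>s. C * s + R / sqrt (real n) * s + g s) ` {0..1})"
      using lb by (intro bdd_belowI2) auto
    have inf_lb: "LB \<le> (INF s\<in>{0..1::real}. C * s + R / sqrt (real n) * s + g s)"
      by (rule cINF_greatest) (use lb in auto)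
    define sn where "sn = - r / (U + \<eta>)"
    have b: "U + \<eta> > 0" using eta U by simp
    have sn0: "0 \<le> sn" unfolding sn_def using rneg b by (simp add: divide_nonpos_pos)
    have snep: "sn \<le> \<epsilon>"
    proof -
      have "- R / ((U + \<eta>) * \<epsilon>) \<le> sqrt (real n)" using n unfolding N0_def by simp
      moreover have "(U + \<eta>) * \<epsilon> > 0" using b ep by simp
      ultimately have "- R \<le> sqrt (real n) * ((U + \<eta>) * \<epsilon>)" using pos_divide_le_eq[of "(U + \<eta>) * \<epsilon>" "-R" "sqrt (real n)"] by simp
      moreover have "sn = (-R) / ((U + \<eta>) * sqrt (real n))" unfolding sn_def r_def by simp
      moreover have "(U + \<eta>) * sqrt (real n) > 0" using sq b by simp
      ultimately show ?thesis using pos_divide_le_eq[of "(U + \<eta>) * sqrt (real n)" "-R" \<epsilon>]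
        by (simp add: algebra_simps)
    qed
    have "(INF s\<in>{0..1::real}. C * s + R / sqrt (real n) * s + g s) \<le> C * sn + R / sqrt (real n) * sn + g sn"
      by (rule cINF_lower[OF bdd]) (use sn0 snep ep in auto)
    also have "\<dots> = f sn + r * sn" unfolding f_def r_def by simp
    also have "\<dots> \<le> (U + \<eta>) * sn\<^sup>2 / 2 + r * sn" using fup[OF sn0 snep] by simp
    also have "\<dots> = - (r\<^sup>2 / (2 * (U + \<eta>)))"
    proof -
      have "\<And>bb. bb > 0 \<Longrightarrow> bb * (-r/bb)\<^sup>2/2 + r*(-r/bb) = -(r\<^sup>2/(2*bb))"
        by (simp add: field_simps power2_eq_square)
      then show ?thesis unfolding sn_def using b by blast
    qed
    finally have inf_ub: "(INF s\<in>{0..1::real}. C * s + R / sqrt (real n) * s + g s) \<le> - (r\<^sup>2 / (2 * (U + \<eta>)))" .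
    have UBn: "real n * (- (r\<^sup>2 / (2 * (U + \<eta>)))) = - (R\<^sup>2 / (2 * (U + \<eta>)))"
    proof -
      have "\<And>bb. bb \<noteq> 0 \<Longrightarrow> real n * (- (R\<^sup>2 / real n / (2 * bb))) = - (R\<^sup>2 / (2 * bb))"
        using n by (simp add: field_simps)
      then show ?thesis unfolding r2 using a0 by blast
    qed
    have np: "real n \<ge> 0" by simp
    show "- (R\<^sup>2 / (2 * (U - \<eta>))) \<le> real n * (INF s\<in>{0..1::real}. C * s + R / sqrt (real n) * s + g s) \<and>
     real n * (INF s\<in>{0..1::real}. C * s + R / sqrt (real n) * s + g s) \<le> - (R\<^sup>2 / (2 * (U + \<eta>)))"
    proof -
      have X1: "real n * LB \<le> real n * (INF s\<in>{0..1::real}. C * s + R / sqrt (real n) * s + g s)"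
        by (rule mult_left_mono[OF inf_lb np])
      have X2: "real n * (INF s\<in>{0..1::real}. C * s + R / sqrt (real n) * s + g s) \<le> real n * (- (r\<^sup>2 / (2 * (U + \<eta>))))"
        by (rule mult_left_mono[OF inf_ub np])
      show ?thesis using X1 X2 LBn UBn by linarith
    qed
  qed
qed


lemma abstract_limit:
  fixes g g1 f2 :: "real \<Rightarrow> real"
  assumes g0: "g 0 = 0" and dg: "\<And>s. s > -1 \<Longrightarrow> (g has_real_derivative g1 s) (at s)"
    and dg1: "\<And>s. s > -1 \<Longrightarrow> (g1 has_real_derivative f2 s) (at s)"
    and f2nn: "\<And>s. s > -1 \<Longrightarrow> 0 \<le> f2 s" and g10: "g1 0 = - C" and f20: "f2 0 = U"
    and U: "U > 0" and R: "R < 0"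
  shows "(\<lambda>n::nat. real n * (INF s\<in>{0..1::real}. C * s + R / sqrt (real n) * s + g s))
         \<longlonglongrightarrow> - (R\<^sup>2 / (2 * U))"
proof (unfold tendsto_iff, intro allI impI)
  fix e :: real assume e: "e > 0"
  define T where "T = - (R\<^sup>2 / (2 * U))"
  have c1: "((\<lambda>\<eta>. - (R\<^sup>2 / (2 * (U - \<eta>)))) \<longlongrightarrow> T) (at_right 0)"
    unfolding T_def using U by (auto intro!: tendsto_eq_intros)
  have c2: "((\<lambda>\<eta>. - (R\<^sup>2 / (2 * (U + \<eta>)))) \<longlongrightarrow> T) (at_right 0)"
    unfolding T_def using U by (auto intro!: tendsto_eq_intros)
  have ev: "\<forall>\<^sub>F \<eta> in at_right 0. dist (- (R\<^sup>2 / (2 * (U - \<eta>)))) T < e \<and>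
      dist (- (R\<^sup>2 / (2 * (U + \<eta>)))) T < e \<and> 0 < \<eta> \<and> \<eta> < U"
  proof (intro eventually_conj)
    show "\<forall>\<^sub>F \<eta> in at_right 0. dist (- (R\<^sup>2 / (2 * (U - \<eta>)))) T < e" using c1 e by (simp add: tendsto_iff)
    show "\<forall>\<^sub>F \<eta> in at_right 0. dist (- (R\<^sup>2 / (2 * (U + \<eta>)))) T < e" using c2 e by (simp add: tendsto_iff)
    show "\<forall>\<^sub>F \<eta> in at_right (0::real). 0 < \<eta>" by (rule eventually_at_right_less)
    show "\<forall>\<^sub>F \<eta> in at_right (0::real). \<eta> < U" using U by (simp add: eventually_at_right_field) (metis)
  qed
  then obtain \<eta> where eta: "dist (- (R\<^sup>2 / (2 * (U - \<eta>)))) T < e"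
      "dist (- (R\<^sup>2 / (2 * (U + \<eta>)))) T < e" "0 < \<eta>" "\<eta> < U"
    using eventually_happens[OF ev] by auto
  show "\<forall>\<^sub>F n in sequentially. dist (real n * (INF s\<in>{0..1::real}. C * s + R / sqrt (real n) * s + g s)) (- (R\<^sup>2 / (2 * U))) < e"
    using abstract_bounds[OF g0 dg dg1 f2nn g10 f20 U R eta(3,4)]
  proof (rule eventually_mono)
    fix n assume "- (R\<^sup>2 / (2 * (U - \<eta>))) \<le> real n * (INF s\<in>{0..1::real}. C * s + R / sqrt (real n) * s + g s) \<and>
     real n * (INF s\<in>{0..1::real}. C * s + R / sqrt (real n) * s + g s) \<le> - (R\<^sup>2 / (2 * (U + \<eta>)))"
    then show "dist (real n * (INF s\<in>{0..1::real}. C * s + R / sqrt (real n) * s + g s)) (- (R\<^sup>2 / (2 * U))) < e"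
      using eta(1,2) unfolding T_def dist_real_def by linarith
  qed
qed



locale chan =
  fixes P :: "'x::finite \<Rightarrow> real" and W :: "'x \<Rightarrow> 'y::finite \<Rightarrow> real"
  assumes ch: "channel W" and ip: "input_distr P"
begin

definition "q y = outdist P W y"
definition "Ay y = {x. 0 < P x \<and> 0 < W x y}"
definition "Yp = {y. 0 < q y}"

lemma W_nn: "0 \<le> W x y" using ch unfolding channel_def by auto
lemma W_sum: "(\<Sum>y\<in>UNIV. W x y) = 1" using ch unfolding channel_def by auto
lemma P_nn: "0 \<le> P x" using ip unfolding input_distr_def by auto
lemma P_sum: "(\<Sum>x\<in>UNIV. P x) = 1" using ip unfolding input_distr_def by auto

lemma q_nn: "0 \<le> q y" unfolding q_def outdist_def by (intro sum_nonneg mult_nonneg_nonneg P_nn W_nn)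

lemma q_sum: "(\<Sum>y\<in>UNIV. q y) = 1"
proof -
  have "(\<Sum>y\<in>UNIV. q y) = (\<Sum>x\<in>UNIV. \<Sum>y\<in>UNIV. P x * W x y)"
    unfolding q_def outdist_def by (rule sum.swap)
  also have "\<dots> = (\<Sum>x\<in>UNIV. P x)" by (simp add: sum_distrib_left[symmetric] W_sum)
  finally show ?thesis using P_sum by simp
qed

lemma q_ge: "P x * W x y \<le> q y"
  unfolding q_def outdist_def
  by (rule member_le_sum) (auto intro: mult_nonneg_nonneg P_nn W_nn)

lemma Ay_Yp: "x \<in> Ay y \<Longrightarrow> y \<in> Yp"
proof -
  assume "x \<in> Ay y"
  then have "0 < P x * W x y" unfolding Ay_def by simp
  then show "y \<in> Yp" using q_ge[of x y] unfolding Yp_def by simp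
qed

lemma Yp_ne: "Yp \<noteq> {}"
proof
  assume "Yp = {}"
  then have "\<And>y. q y = 0" unfolding Yp_def using q_nn by (metis empty_iff mem_Collect_eq order_less_le)
  then show False using q_sum by simp
qed

lemma q_Ay: "q y = (\<Sum>x\<in>Ay y. P x * W x y)"
  unfolding q_def outdist_def
proof (rule sum.mono_neutral_right)
  show "\<forall>x\<in>UNIV - Ay y. P x * W x y = 0"
  proof
    fix x assume "x \<in> UNIV - Ay y"
    then have "\<not> 0 < P x \<or> \<not> 0 < W x y" unfolding Ay_def by auto
    then have "P x = 0 \<or> W x y = 0" using P_nn[of x] W_nn[of x y] by linarith
    then show "P x * W x y = 0" by auto
  qed
qed auto

lemma Ay_ne: "y \<in> Yp \<Longrightarrow> Ay y \<noteq> {}"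
  using q_Ay[of y] unfolding Yp_def by auto

lemma P_Ay: "x \<in> Ay y \<Longrightarrow> 0 < P x" and W_Ay: "x \<in> Ay y \<Longrightarrow> 0 < W x y"
  unfolding Ay_def by auto

definition "phi y u = ln (Sx (Ay y) P (\<lambda>x. u * ln (W x y)))"
definition "mm y u = Mx (Ay y) P (\<lambda>x. u * ln (W x y)) (\<lambda>x. ln (W x y))"
definition "vv y u = Vx (Ay y) P (\<lambda>x. u * ln (W x y)) (\<lambda>x. ln (W x y)) (\<lambda>x. 0)"
definition "h y s = (1 + s) * phi y (1 / (1 + s))"
definition "h1 y s = phi y (1 / (1 + s)) - mm y (1 / (1 + s)) / (1 + s)"
definition "h2 y s = vv y (1 / (1 + s)) / (1 + s) ^ 3"
definition "psi s = ln (Sx Yp (\<lambda>_. 1) (\<lambda>y. h y s))"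
definition "psi1 s = Mx Yp (\<lambda>_. 1) (\<lambda>y. h y s) (\<lambda>y. h1 y s)"
definition "psi2 s = Vx Yp (\<lambda>_. 1) (\<lambda>y. h y s) (\<lambda>y. h1 y s) (\<lambda>y. h2 y s)"

lemma d_phi: "y \<in> Yp \<Longrightarrow> (phi y has_real_derivative mm y u) (at u)"
  unfolding phi_def[abs_def] mm_def
  by (rule lse_deriv[of "Ay y" P "\<lambda>x u. u * ln (W x y)" "\<lambda>x. ln (W x y)" u, simplified])
     (auto simp: Ay_ne P_Ay intro!: derivative_eq_intros)

lemma d_mm: "y \<in> Yp \<Longrightarrow> (mm y has_real_derivative vv y u) (at u)"
  unfolding mm_def[abs_def] vv_def
  by (rule lse_mean_deriv[of "Ay y" P "\<lambda>x u. u * ln (W x y)" "\<lambda>x u. ln (W x y)" u "\<lambda>x. 0", simplified])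
     (auto simp: Ay_ne P_Ay intro!: derivative_eq_intros)

lemma vv_nn: "y \<in> Yp \<Longrightarrow> 0 \<le> vv y u"
  unfolding vv_def by (rule Vx_nonneg) (auto simp: Ay_ne P_Ay)

lemma d_inv: "s > -1 \<Longrightarrow> ((\<lambda>s. 1 / (1 + s)) has_real_derivative (- ((1 / (1 + s))\<^sup>2))) (at s)"
  by (auto intro!: derivative_eq_intros simp: power2_eq_square field_simps)

lemma alg1: "t \<noteq> 0 \<Longrightarrow> 1 * a + (b * (- ((1/t)\<^sup>2))) * t = a - b / (t::real)"
  by (simp add: field_simps power2_eq_square)
lemma alg2: "t \<noteq> 0 \<Longrightarrow> b * (- ((1/t)\<^sup>2)) - ((c * (- ((1/t)\<^sup>2))) * t - b * 1) / (t * t) = c / (t::real)^3"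
  by (simp add: field_simps power2_eq_square power3_eq_cube)

lemma d_h: assumes "y \<in> Yp" "s > -1" shows "(h y has_real_derivative h1 y s) (at s)"
proof -
  have c: "((\<lambda>s. phi y (1 / (1 + s))) has_real_derivative mm y (1 / (1 + s)) * (- ((1 / (1 + s))\<^sup>2))) (at s)"
    by (rule DERIV_chain2[OF d_phi[OF assms(1)] d_inv[OF assms(2)]])
  have "((\<lambda>s. (1 + s) * phi y (1 / (1 + s))) has_real_derivative
      1 * phi y (1 / (1 + s)) + (mm y (1 / (1 + s)) * (- ((1 / (1 + s))\<^sup>2))) * (1 + s)) (at s)"
    by (rule DERIV_mult[OF _ c]) (auto intro!: derivative_eq_intros)
  moreover have "1 * phi y (1 / (1 + s)) + (mm y (1 / (1 + s)) * (- ((1 / (1 + s))\<^sup>2))) * (1 + s) = h1 y s"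
    unfolding h1_def using assms(2) alg1[of "1+s"] by simp
  ultimately show ?thesis unfolding h_def[abs_def] by simp
qed

lemma d_h1: assumes "y \<in> Yp" "s > -1" shows "(h1 y has_real_derivative h2 y s) (at s)"
proof -
  have c: "((\<lambda>s. phi y (1 / (1 + s))) has_real_derivative mm y (1 / (1 + s)) * (- ((1 / (1 + s))\<^sup>2))) (at s)"
    by (rule DERIV_chain2[OF d_phi[OF assms(1)] d_inv[OF assms(2)]])
  have c2: "((\<lambda>s. mm y (1 / (1 + s))) has_real_derivative vv y (1 / (1 + s)) * (- ((1 / (1 + s))\<^sup>2))) (at s)"
    by (rule DERIV_chain2[OF d_mm[OF assms(1)] d_inv[OF assms(2)]])
  have q: "((\<lambda>s. mm y (1 / (1 + s)) / (1 + s)) has_real_derivative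
     ((vv y (1 / (1 + s)) * (- ((1 / (1 + s))\<^sup>2))) * (1 + s) - mm y (1 / (1 + s)) * 1) / ((1 + s) * (1 + s))) (at s)"
    by (rule DERIV_divide[OF c2]) (use assms(2) in \<open>auto intro!: derivative_eq_intros\<close>)
  have "((\<lambda>s. phi y (1 / (1 + s)) - mm y (1 / (1 + s)) / (1 + s)) has_real_derivative
     mm y (1 / (1 + s)) * (- ((1 / (1 + s))\<^sup>2)) - ((vv y (1 / (1 + s)) * (- ((1 / (1 + s))\<^sup>2))) * (1 + s) - mm y (1 / (1 + s)) * 1) / ((1 + s) * (1 + s))) (at s)"
    by (rule DERIV_diff[OF c q])
  moreover have "mm y (1 / (1 + s)) * (- ((1 / (1 + s))\<^sup>2)) - ((vv y (1 / (1 + s)) * (- ((1 / (1 + s))\<^sup>2))) * (1 + s) - mm y (1 / (1 + s)) * 1) / ((1 + s) * (1 + s)) = h2 y s"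
    unfolding h2_def using assms(2) alg2[of "1+s"] by simp
  ultimately show ?thesis unfolding h1_def[abs_def] by simp
qed

lemma h2_nn: "y \<in> Yp \<Longrightarrow> s > -1 \<Longrightarrow> 0 \<le> h2 y s"
  unfolding h2_def using vv_nn by simp

lemma d_psi: assumes "s > -1" shows "(psi has_real_derivative psi1 s) (at s)"
  unfolding psi_def[abs_def] psi1_def
  by (rule lse_deriv[of Yp "\<lambda>_. 1" h "\<lambda>y. h1 y s" s]) (use assms in \<open>auto simp: Yp_ne d_h\<close>)

lemma d_psi1: assumes "s > -1" shows "(psi1 has_real_derivative psi2 s) (at s)"
  unfolding psi1_def[abs_def] psi2_def
  by (rule lse_mean_deriv[of Yp "\<lambda>_. 1" h h1 s "\<lambda>y. h2 y s"]) (use assms in \<open>auto simp: Yp_ne d_h d_h1\<close>)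

lemma psi2_nn: "s > -1 \<Longrightarrow> 0 \<le> psi2 s"
  unfolding psi2_def by (rule Vx_nonneg) (auto simp: Yp_ne h2_nn)


lemma inner_eq: "(\<Sum>x\<in>UNIV. P x * W x y powr u) = Sx (Ay y) P (\<lambda>x. u * ln (W x y))"
proof -
  have "(\<Sum>x\<in>UNIV. P x * W x y powr u) = (\<Sum>x\<in>Ay y. P x * W x y powr u)"
  proof (rule sum.mono_neutral_right)
    show "\<forall>x\<in>UNIV - Ay y. P x * W x y powr u = 0"
    proof
      fix x assume "x \<in> UNIV - Ay y"
      then have "\<not> 0 < P x \<or> \<not> 0 < W x y" unfolding Ay_def by auto
      then have "P x = 0 \<or> W x y = 0" using P_nn[of x] W_nn[of x y] by linarith
      then show "P x * W x y powr u = 0" by auto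
    qed
  qed auto
  also have "\<dots> = Sx (Ay y) P (\<lambda>x. u * ln (W x y))"
    unfolding Sx_def by (rule sum.cong) (auto simp: powr_def W_Ay dest: W_Ay)
  finally show ?thesis .
qed

lemma gal_eq: assumes "s > -1" shows "gallager P W s = psi s"
proof -
  have "(\<Sum>y\<in>UNIV. (\<Sum>x\<in>UNIV. P x * W x y powr (1 / (1 + s))) powr (1 + s))
      = (\<Sum>y\<in>Yp. (\<Sum>x\<in>UNIV. P x * W x y powr (1 / (1 + s))) powr (1 + s))"
  proof (rule sum.mono_neutral_right)
    show "\<forall>y\<in>UNIV - Yp. (\<Sum>x\<in>UNIV. P x * W x y powr (1 / (1 + s))) powr (1 + s) = 0"
    proof
      fix y assume "y \<in> UNIV - Yp"
      then have "Ay y = {}" using Ay_Yp by blast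
      then show "(\<Sum>x\<in>UNIV. P x * W x y powr (1 / (1 + s))) powr (1 + s) = 0"
        unfolding inner_eq Sx_def by simp
    qed
  qed auto
  also have "\<dots> = Sx Yp (\<lambda>_. 1) (\<lambda>y. h y s)"
    unfolding Sx_def
  proof (rule sum.cong)
    fix y assume y: "y \<in> Yp"
    have "0 < Sx (Ay y) P (\<lambda>x. 1 / (1 + s) * ln (W x y))"
      by (rule Sx_pos) (auto simp: Ay_ne[OF y] P_Ay)
    then show "(\<Sum>x\<in>UNIV. P x * W x y powr (1 / (1 + s))) powr (1 + s) = 1 * exp (h y s)"
      unfolding inner_eq h_def phi_def by (simp add: powr_def mult.commute)
  qed auto
  finally show ?thesis unfolding gallager_def psi_def by simp
qed

definition "ES F = (\<Sum>x\<in>UNIV. P x * (\<Sum>y\<in>{y. 0 < W x y}. W x y * F x y))"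

lemma ES_swap: "ES F = (\<Sum>y\<in>Yp. \<Sum>x\<in>Ay y. P x * W x y * F x y)"
proof -
  have L: "P x * (\<Sum>y\<in>{y. 0 < W x y}. W x y * F x y) = (\<Sum>y\<in>UNIV. if x \<in> Ay y then P x * W x y * F x y else 0)" for x
  proof (cases "0 < P x")
    case True
    have "P x * (\<Sum>y\<in>{y. 0 < W x y}. W x y * F x y) = (\<Sum>y\<in>{y\<in>UNIV. 0 < W x y}. P x * W x y * F x y)"
      by (simp add: sum_distrib_left mult.assoc)
    also have "\<dots> = (\<Sum>y\<in>UNIV. if 0 < W x y then P x * W x y * F x y else 0)"
      by (rule sum.inter_filter) simp
    finally show ?thesis using True by (simp add: Ay_def)
  next
    case False
    then have "P x = 0" using P_nn[of x] by linarith
    then show ?thesis by (simp add: Ay_def)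
  qed
  have R: "(\<Sum>x\<in>Ay y. P x * W x y * F x y) = (\<Sum>x\<in>UNIV. if x \<in> Ay y then P x * W x y * F x y else 0)" for y
    using sum.inter_restrict[of UNIV "\<lambda>x. P x * W x y * F x y" "Ay y"] by simp
  have "ES F = (\<Sum>x\<in>UNIV. \<Sum>y\<in>UNIV. if x \<in> Ay y then P x * W x y * F x y else 0)"
    unfolding ES_def using L by simp
  also have "\<dots> = (\<Sum>y\<in>UNIV. \<Sum>x\<in>UNIV. if x \<in> Ay y then P x * W x y * F x y else 0)"
    by (rule sum.swap)
  also have "\<dots> = (\<Sum>y\<in>Yp. \<Sum>x\<in>UNIV. if x \<in> Ay y then P x * W x y * F x y else 0)"
  proof (rule sum.mono_neutral_right)
    show "\<forall>y\<in>UNIV - Yp. (\<Sum>x\<in>UNIV. if x \<in> Ay y then P x * W x y * F x y else 0) = 0"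
      using Ay_Yp by (auto intro!: sum.neutral)
  qed auto
  finally show ?thesis using R by simp
qed

lemma Sx_one: "Sx (Ay y) P (\<lambda>x. 1 * ln (W x y)) = q y"
  unfolding Sx_def q_Ay by (rule sum.cong) (auto dest: W_Ay)

lemma phi1: "phi y 1 = ln (q y)" unfolding phi_def Sx_one ..

lemma mm1: "mm y 1 = (\<Sum>x\<in>Ay y. P x * W x y * ln (W x y)) / q y"
  unfolding mm_def Mx_def Sx_one
  by (rule arg_cong[where f="\<lambda>z. z / q y"], rule sum.cong) (auto dest: W_Ay)

lemma vv1: "vv y 1 = (\<Sum>x\<in>Ay y. P x * W x y * (ln (W x y))\<^sup>2) / q y - (mm y 1)\<^sup>2"
proof -
  have "(\<Sum>x\<in>Ay y. P x * exp (1 * ln (W x y)) * (0 + (ln (W x y))\<^sup>2)) = (\<Sum>x\<in>Ay y. P x * W x y * (ln (W x y))\<^sup>2)"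
    by (rule sum.cong) (auto dest: W_Ay)
  then show ?thesis unfolding vv_def Vx_def mm_def[symmetric] Sx_one by simp
qed

lemma psi0: "psi 0 = 0"
proof -
  have "Sx Yp (\<lambda>_. 1) (\<lambda>y. h y 0) = (\<Sum>y\<in>Yp. q y)"
    unfolding Sx_def by (rule sum.cong) (auto simp: Yp_def h_def phi1)
  also have "\<dots> = (\<Sum>y\<in>UNIV. q y)"
    by (rule sum.mono_neutral_left) (auto simp: Yp_def, metis q_nn order_less_le)
  finally show ?thesis unfolding psi_def q_sum by simp
qed


lemma Sx_h0: "Sx Yp (\<lambda>_. 1) (\<lambda>y. h y 0) = 1"
proof -
  have "Sx Yp (\<lambda>_. 1) (\<lambda>y. h y 0) = (\<Sum>y\<in>Yp. q y)"
    unfolding Sx_def by (rule sum.cong) (auto simp: Yp_def h_def phi1)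
  also have "\<dots> = (\<Sum>y\<in>UNIV. q y)"
    by (rule sum.mono_neutral_left) (auto simp: Yp_def, metis q_nn order_less_le)
  finally show ?thesis unfolding q_sum by simp
qed

lemma mutinf_ES: "mutinf P W = ES (\<lambda>x y. ln (W x y / q y))"
  unfolding mutinf_def relent_def ES_def q_def by simp

lemma q_pos: "y \<in> Yp \<Longrightarrow> 0 < q y" unfolding Yp_def by simp

lemma sum_split_L:
  assumes y: "y \<in> Yp"
  shows "(\<Sum>x\<in>Ay y. P x * W x y * G (ln (W x y / q y))) = (\<Sum>x\<in>Ay y. P x * W x y * G (ln (W x y) - ln (q y)))"
proof (rule sum.cong)
  fix x assume "x \<in> Ay y"
  then have "0 < W x y" by (rule W_Ay)
  then show "P x * W x y * G (ln (W x y / q y)) = P x * W x y * G (ln (W x y) - ln (q y))"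
    using q_pos[OF y] by (simp add: ln_div)
qed simp

lemma sumL: assumes y: "y \<in> Yp"
  shows "(\<Sum>x\<in>Ay y. P x * W x y * ln (W x y / q y)) = q y * mm y 1 - q y * ln (q y)"
proof -
  have "(\<Sum>x\<in>Ay y. P x * W x y * ln (W x y / q y)) = (\<Sum>x\<in>Ay y. P x * W x y * (ln (W x y) - ln (q y)))"
    using sum_split_L[OF y, of "\<lambda>z. z"] by simp
  also have "\<dots> = (\<Sum>x\<in>Ay y. P x * W x y * ln (W x y)) - ln (q y) * (\<Sum>x\<in>Ay y. P x * W x y)"
    by (simp add: algebra_simps sum_subtractf sum_distrib_left)
  also have "\<dots> = q y * mm y 1 - q y * ln (q y)"
    unfolding mm1 q_Ay[symmetric] using q_pos[OF y] by simp
  finally show ?thesis .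
qed

lemma psi1_0: "psi1 0 = - mutinf P W"
proof -
  have "psi1 0 = (\<Sum>y\<in>Yp. 1 * exp (h y 0) * h1 y 0)"
    unfolding psi1_def Mx_def Sx_h0 by simp
  also have "\<dots> = (\<Sum>y\<in>Yp. - (\<Sum>x\<in>Ay y. P x * W x y * ln (W x y / q y)))"
  proof (rule sum.cong)
    fix y assume y: "y \<in> Yp"
    show "1 * exp (h y 0) * h1 y 0 = - (\<Sum>x\<in>Ay y. P x * W x y * ln (W x y / q y))"
      using sumL[OF y] q_pos[OF y] by (simp add: h_def h1_def phi1 algebra_simps)
  qed simp
  also have "\<dots> = - ES (\<lambda>x y. ln (W x y / q y))"
    unfolding ES_swap by (simp add: sum_negf)
  finally show ?thesis unfolding mutinf_ES .
qed

lemma sumL2: assumes y: "y \<in> Yp"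
  shows "(\<Sum>x\<in>Ay y. P x * W x y * (ln (W x y / q y))\<^sup>2) = q y * (vv y 1 + (ln (q y) - mm y 1)\<^sup>2)"
proof -
  define B where "B = (\<Sum>x\<in>Ay y. P x * W x y * ln (W x y))"
  define Cc where "Cc = (\<Sum>x\<in>Ay y. P x * W x y * (ln (W x y))\<^sup>2)"
  define lq where "lq = ln (q y)"
  have qp: "q y > 0" using q_pos[OF y] .
  have "(\<Sum>x\<in>Ay y. P x * W x y * (ln (W x y / q y))\<^sup>2) = (\<Sum>x\<in>Ay y. P x * W x y * (ln (W x y) - ln (q y))\<^sup>2)"
    using sum_split_L[OF y, of "\<lambda>z. z\<^sup>2"] by simp
  also have "\<dots> = (\<Sum>x\<in>Ay y. P x * W x y * (ln (W x y))\<^sup>2 - 2 * lq * (P x * W x y * ln (W x y)) + lq\<^sup>2 * (P x * W x y))"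
    by (rule sum.cong) (auto simp: lq_def power2_eq_square algebra_simps)
  also have "\<dots> = Cc - 2 * lq * B + lq\<^sup>2 * q y"
    unfolding Cc_def B_def q_Ay by (simp add: sum.distrib sum_subtractf sum_distrib_left)
  also have "\<dots> = q y * (vv y 1 + (ln (q y) - mm y 1)\<^sup>2)"
    unfolding vv1 mm1 B_def[symmetric] Cc_def[symmetric] lq_def[symmetric] using qp
    by (simp add: field_simps power2_eq_square)
  finally show ?thesis .
qed

lemma psi2_0: "psi2 0 = ES (\<lambda>x y. (ln (W x y / q y))\<^sup>2) - (mutinf P W)\<^sup>2"
proof -
  have "psi2 0 = (\<Sum>y\<in>Yp. 1 * exp (h y 0) * (h2 y 0 + (h1 y 0)\<^sup>2)) - (psi1 0)\<^sup>2"
    unfolding psi2_def Vx_def Sx_h0 psi1_def by simp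
  also have "(\<Sum>y\<in>Yp. 1 * exp (h y 0) * (h2 y 0 + (h1 y 0)\<^sup>2)) = (\<Sum>y\<in>Yp. \<Sum>x\<in>Ay y. P x * W x y * (ln (W x y / q y))\<^sup>2)"
  proof (rule sum.cong)
    fix y assume y: "y \<in> Yp"
    show "1 * exp (h y 0) * (h2 y 0 + (h1 y 0)\<^sup>2) = (\<Sum>x\<in>Ay y. P x * W x y * (ln (W x y / q y))\<^sup>2)"
      using sumL2[OF y] q_pos[OF y] by (simp add: h_def h1_def h2_def phi1)
  qed simp
  finally show ?thesis unfolding ES_swap psi1_0 by simp
qed


lemma sum_Wpos: "(\<Sum>y\<in>{y. 0 < W x y}. W x y * F y) = (\<Sum>y\<in>UNIV. W x y * F y)"
proof (rule sum.mono_neutral_left)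
  show "\<forall>y\<in>UNIV - {y. 0 < W x y}. W x y * F y = 0"
  proof
    fix y assume "y \<in> UNIV - {y. 0 < W x y}"
    then have "W x y = 0" using W_nn[of x y] by auto
    then show "W x y * F y = 0" by simp
  qed
qed auto

lemma sum_Yp: assumes "0 < P a" shows "(\<Sum>y\<in>Yp. W a y * F y) = (\<Sum>y\<in>UNIV. W a y * F y)"
proof (rule sum.mono_neutral_left)
  show "\<forall>y\<in>UNIV - Yp. W a y * F y = 0"
  proof
    fix y assume "y \<in> UNIV - Yp"
    then have "\<not> 0 < W a y" using Ay_Yp[of a y] assms unfolding Ay_def by auto
    then have "W a y = 0" using W_nn[of a y] by auto
    then show "W a y * F y = 0" by simp
  qed
qed auto

definition "cc x = (\<Sum>y\<in>{y. 0 < W x y}. W x y * ln (W x y))"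

lemma mutinf_formula:
  fixes Q :: "'x \<Rightarrow> real"
  assumes Qnn: "\<And>x. 0 \<le> Q x"
  shows "mutinf Q W = (\<Sum>x\<in>UNIV. Q x * cc x) - (\<Sum>y\<in>UNIV. outdist Q W y * ln (outdist Q W y))"
proof -
  define oq where "oq = outdist Q W"
  have oge: "Q x * W x y \<le> oq y" for x y
    unfolding oq_def outdist_def
    by (rule member_le_sum) (auto intro: mult_nonneg_nonneg Qnn W_nn)
  have per: "Q x * relent (W x) oq = Q x * cc x - Q x * (\<Sum>y\<in>UNIV. W x y * ln (oq y))" for x
  proof (cases "0 < Q x")
    case True
    have "relent (W x) oq = (\<Sum>y\<in>{y. 0 < W x y}. W x y * (ln (W x y) - ln (oq y)))"
      unfolding relent_def
    proof (rule sum.cong)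
      fix y assume "y \<in> {y. 0 < W x y}"
      then have w: "0 < W x y" by simp
      then have "0 < oq y" using oge[of x y] True by (smt (verit) mult_pos_pos)
      then show "W x y * ln (W x y / oq y) = W x y * (ln (W x y) - ln (oq y))" using w by (simp add: ln_div)
    qed simp
    also have "\<dots> = cc x - (\<Sum>y\<in>{y. 0 < W x y}. W x y * ln (oq y))"
      unfolding cc_def by (simp add: algebra_simps sum_subtractf)
    finally have "relent (W x) oq = cc x - (\<Sum>y\<in>UNIV. W x y * ln (oq y))" unfolding sum_Wpos .
    then show ?thesis by (simp add: right_diff_distrib)
  next
    case False
    then have "Q x = 0" using Qnn[of x] by linarith
    then show ?thesis by simp
  qed
  have "(\<Sum>x\<in>UNIV. Q x * (\<Sum>y\<in>UNIV. W x y * ln (oq y))) = (\<Sum>y\<in>UNIV. \<Sum>x\<in>UNIV. Q x * W x y * ln (oq y))"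
    by (subst sum.swap) (simp add: sum_distrib_left mult.assoc)
  also have "\<dots> = (\<Sum>y\<in>UNIV. oq y * ln (oq y))"
    unfolding oq_def outdist_def by (simp add: sum_distrib_right)
  finally have sw: "(\<Sum>x\<in>UNIV. Q x * (\<Sum>y\<in>UNIV. W x y * ln (oq y))) = (\<Sum>y\<in>UNIV. oq y * ln (oq y))" .
  show ?thesis
    unfolding mutinf_def oq_def[symmetric] using per sw by (simp add: sum_subtractf)
qed

lemma mutinf_bdd:
  fixes Q :: "'x \<Rightarrow> real"
  assumes "input_distr Q"
  shows "mutinf Q W \<le> real CARD('x)"
proof -
  have Qnn: "0 \<le> Q x" for x using assms unfolding input_distr_def by auto
  define oq where "oq = outdist Q W"
  have oge: "Q x * W x y \<le> oq y" for x y
    unfolding oq_def outdist_def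
    by (rule member_le_sum) (auto intro: mult_nonneg_nonneg Qnn W_nn)
  have "Q x * relent (W x) oq \<le> 1" for x
  proof (cases "0 < Q x")
    case True
    have "relent (W x) oq \<le> (\<Sum>y\<in>{y. 0 < W x y}. W x y * (1 / Q x))"
      unfolding relent_def
    proof (rule sum_mono)
      fix y assume "y \<in> {y. 0 < W x y}"
      then have w: "0 < W x y" by simp
      then have op: "0 < oq y" using oge[of x y] True by (smt (verit) mult_pos_pos)
      have "ln (W x y / oq y) \<le> W x y / oq y" using w op by (smt (verit) divide_pos_pos ln_le_minus_one)
      also have "\<dots> \<le> 1 / Q x" using oge[of x y] True op w by (simp add: field_simps)
      finally show "W x y * ln (W x y / oq y) \<le> W x y * (1 / Q x)" using w by (intro mult_left_mono) auto
    qed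
    also have "\<dots> = (\<Sum>y\<in>UNIV. W x y) / Q x" using sum_Wpos[of x "\<lambda>_. 1 / Q x"]
      by (simp add: sum_divide_distrib)
    finally have "relent (W x) oq \<le> 1 / Q x" using W_sum by simp
    then show ?thesis using True by (simp add: field_simps)
  next
    case False
    then have "Q x = 0" using Qnn[of x] by linarith
    then show ?thesis by simp
  qed
  note one = this
  have "mutinf Q W \<le> (\<Sum>x::'x\<in>UNIV. (1::real))"
    unfolding mutinf_def oq_def[symmetric]
    by (rule sum_mono) (rule one)
  then show ?thesis by simp
qed

lemma le_capacity: "input_distr Q \<Longrightarrow> mutinf Q W \<le> capacity W"
  unfolding capacity_def
  by (rule cSup_upper) (auto intro!: bdd_aboveI[where M="real CARD('x)"] mutinf_bdd)


lemma W_zero_out: "0 < P a \<Longrightarrow> y \<notin> Yp \<Longrightarrow> W a y = 0"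
  using Ay_Yp[of a y] W_nn[of a y] unfolding Ay_def by force

lemma relent_Yp: assumes "0 < P a"
  shows "relent (W a) q = cc a - (\<Sum>y\<in>Yp. W a y * ln (q y))"
proof -
  have "relent (W a) q = (\<Sum>y\<in>{y. 0 < W a y}. W a y * (ln (W a y) - ln (q y)))"
    unfolding relent_def
  proof (rule sum.cong)
    fix y assume "y \<in> {y. 0 < W a y}"
    then have w: "0 < W a y" by simp
    then have "a \<in> Ay y" using assms unfolding Ay_def by simp
    then have "0 < q y" using q_pos Ay_Yp by blast
    then show "W a y * ln (W a y / q y) = W a y * (ln (W a y) - ln (q y))" using w by (simp add: ln_div)
  qed simp
  also have "\<dots> = cc a - (\<Sum>y\<in>{y. 0 < W a y}. W a y * ln (q y))"
    unfolding cc_def by (simp add: algebra_simps sum_subtractf)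
  finally show ?thesis unfolding sum_Wpos sum_Yp[OF assms] .
qed

lemma sum_W_Yp: "0 < P a \<Longrightarrow> (\<Sum>y\<in>Yp. W a y) = 1"
  using sum_Yp[of a "\<lambda>_. 1"] W_sum by simp

lemma kkt_pair:
  assumes cap: "mutinf P W = capacity W" and a: "0 < P a" and b: "0 < P b"
  shows "relent (W a) q = relent (W b) q"
proof -
  define \<delta> where "\<delta> = min (P a) (P b)"
  have dp: "0 < \<delta>" using a b unfolding \<delta>_def by simp
  define Pl where "Pl l x = P x + l * ((if x = a then 1 else 0) - (if x = b then 1 else 0))" for l :: real and x
  define d where "d y = W a y - W b y" for y
  define N where "N l = (\<Sum>x\<in>UNIV. P x * cc x) + l * (cc a - cc b) - (\<Sum>y\<in>Yp. (q y + l * d y) * ln (q y + l * d y))" for l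
  have dsum: "(\<Sum>x\<in>UNIV. (if x = c then 1 else 0) * f x) = (f c :: real)" for c :: 'x and f
  proof -
    have "(\<lambda>x. (if x = c then 1 else 0) * f x) = (\<lambda>x. if x = c then f x else (0::real))" by auto
    then show ?thesis by (simp only: sum.delta finite UNIV_I if_True)
  qed
  have lin: "(\<Sum>x\<in>UNIV. Pl l x * f x) = (\<Sum>x\<in>UNIV. P x * f x) + l * (f a - f b)" for l f
  proof -
    have "(\<Sum>x\<in>UNIV. Pl l x * f x) = (\<Sum>x\<in>UNIV. P x * f x + l * ((if x = a then 1 else 0) * f x) - l * ((if x = b then 1 else 0) * f x))"
      unfolding Pl_def by (rule sum.cong) (auto simp: algebra_simps)
    also have "\<dots> = (\<Sum>x\<in>UNIV. P x * f x) + l * (\<Sum>x\<in>UNIV. (if x = a then 1 else 0) * f x) - l * (\<Sum>x\<in>UNIV. (if x = b then 1 else 0) * f x)"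
      by (simp add: sum.distrib sum_subtractf sum_distrib_left)
    finally show ?thesis unfolding dsum by (simp add: algebra_simps)
  qed
  have out: "outdist (Pl l) W y = q y + l * d y" for l y
    unfolding outdist_def lin q_def d_def ..
  have ccsum: "(\<Sum>x\<in>UNIV. Pl l x * cc x) = (\<Sum>x\<in>UNIV. P x * cc x) + l * (cc a - cc b)" for l
    by (rule lin)
  have Plnn: "0 \<le> Pl l x" if "\<bar>l\<bar> < \<delta>" for l x
    using that P_nn[of x] unfolding Pl_def \<delta>_def by (auto split: if_splits)
  have Plid: "input_distr (Pl l)" if "\<bar>l\<bar> < \<delta>" for l
  proof -
    have "(\<Sum>x\<in>UNIV. Pl l x) = 1" using lin[of l "\<lambda>_. 1"] P_sum by simp
    then show ?thesis unfolding input_distr_def using Plnn[OF that] by simp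
  qed
  have MN: "mutinf (Pl l) W = N l" if "\<bar>l\<bar> < \<delta>" for l
  proof -
    have "(\<Sum>y\<in>UNIV. outdist (Pl l) W y * ln (outdist (Pl l) W y)) = (\<Sum>y\<in>Yp. (q y + l * d y) * ln (q y + l * d y))"
      unfolding out
    proof (rule sum.mono_neutral_right)
      show "\<forall>y\<in>UNIV - Yp. (q y + l * d y) * ln (q y + l * d y) = 0"
      proof
        fix y assume "y \<in> UNIV - Yp"
        then have "q y = 0" "W a y = 0" "W b y = 0" using W_zero_out a b q_nn[of y] unfolding Yp_def by auto
        then show "(q y + l * d y) * ln (q y + l * d y) = 0" unfolding d_def by simp
      qed
    qed auto
    then show ?thesis unfolding mutinf_formula[OF Plnn[OF that]] ccsum N_def by simp
  qed
  have P0: "Pl 0 = P" unfolding Pl_def by auto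
  have N0: "N 0 = mutinf P W" using MN[of 0] dp P0 by simp
  have le: "\<forall>l. \<bar>0 - l\<bar> < \<delta> \<longrightarrow> N l \<le> N 0"
  proof (intro allI impI)
    fix l :: real assume "\<bar>0 - l\<bar> < \<delta>"
    then have l: "\<bar>l\<bar> < \<delta>" by simp
    have "N l = mutinf (Pl l) W" using MN[OF l] by simp
    also have "\<dots> \<le> capacity W" by (rule le_capacity[OF Plid[OF l]])
    finally show "N l \<le> N 0" using N0 cap by simp
  qed
  define D where "D = (cc a - cc b) - (\<Sum>y\<in>Yp. d y * ln (q y) + d y)"
  have dterm: "((\<lambda>l. (q y + l * d y) * ln (q y + l * d y)) has_real_derivative d y * ln (q y) + d y) (at 0)"
    if y: "y \<in> Yp" for y
  proof -
    have qp: "0 < q y" using q_pos[OF y] .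
    show ?thesis
      by (rule derivative_eq_intros refl | use qp in simp)+
  qed
  have dN: "(N has_real_derivative D) (at 0)"
  proof -
    have s1: "((\<lambda>l. \<Sum>y\<in>Yp. (q y + l * d y) * ln (q y + l * d y)) has_real_derivative (\<Sum>y\<in>Yp. d y * ln (q y) + d y)) (at 0)"
      by (rule DERIV_sum) (rule dterm)
    have s2: "((\<lambda>l. (\<Sum>x\<in>UNIV. P x * cc x) + l * (cc a - cc b)) has_real_derivative (cc a - cc b)) (at 0)"
      by (auto intro!: derivative_eq_intros)
    show ?thesis unfolding N_def[abs_def] D_def by (rule DERIV_diff[OF s2 s1])
  qed
  have "D = 0" by (rule DERIV_local_max[OF dN dp le])
  then have "cc a - cc b = (\<Sum>y\<in>Yp. W a y * ln (q y)) - (\<Sum>y\<in>Yp. W b y * ln (q y)) + ((\<Sum>y\<in>Yp. W a y) - (\<Sum>y\<in>Yp. W b y))"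
    unfolding D_def d_def by (simp add: algebra_simps sum.distrib sum_subtractf)
  then show ?thesis unfolding relent_Yp[OF a] relent_Yp[OF b] sum_W_Yp[OF a] sum_W_Yp[OF b] by simp
qed

lemma kkt:
  assumes cap: "mutinf P W = capacity W" and a: "0 < P a"
  shows "relent (W a) q = mutinf P W"
proof -
  have "mutinf P W = (\<Sum>x\<in>UNIV. P x * relent (W a) q)"
    unfolding mutinf_def q_def[symmetric]
  proof (rule sum.cong)
    fix x
    show "P x * relent (W x) q = P x * relent (W a) q"
    proof (cases "0 < P x")
      case True then show ?thesis using kkt_pair[OF cap True a] by simp
    next
      case False then have "P x = 0" using P_nn[of x] by linarith
      then show ?thesis by simp
    qed
  qed simp
  also have "\<dots> = relent (W a) q" using P_sum by (simp add: sum_distrib_right[symmetric])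
  finally show ?thesis by simp
qed


lemma ES_one: "ES (\<lambda>x y. 1) = 1"
  unfolding ES_def using sum_Wpos[of _ "\<lambda>_. 1"] W_sum P_sum by simp

lemma ES_sq: "ES (\<lambda>x y. (F x y - c)\<^sup>2) = ES (\<lambda>x y. (F x y)\<^sup>2) - 2 * c * ES F + c\<^sup>2 * ES (\<lambda>x y. 1)"
proof -
  have "ES (\<lambda>x y. (F x y - c)\<^sup>2) = (\<Sum>x\<in>UNIV. P x * (\<Sum>y\<in>{y. 0 < W x y}. W x y * (F x y)\<^sup>2)
     - 2 * c * (P x * (\<Sum>y\<in>{y. 0 < W x y}. W x y * F x y)) + c\<^sup>2 * (P x * (\<Sum>y\<in>{y. 0 < W x y}. W x y * 1)))"
    unfolding ES_def
  proof (rule sum.cong)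
    fix x
    have "(\<Sum>y\<in>{y. 0 < W x y}. W x y * (F x y - c)\<^sup>2) = (\<Sum>y\<in>{y. 0 < W x y}. W x y * (F x y)\<^sup>2 - 2 * c * (W x y * F x y) + c\<^sup>2 * (W x y * 1))"
      by (rule sum.cong) (auto simp: power2_eq_square algebra_simps)
    also have "\<dots> = (\<Sum>y\<in>{y. 0 < W x y}. W x y * (F x y)\<^sup>2) - 2 * c * (\<Sum>y\<in>{y. 0 < W x y}. W x y * F x y) + c\<^sup>2 * (\<Sum>y\<in>{y. 0 < W x y}. W x y * 1)"
      by (simp add: sum.distrib sum_subtractf sum_distrib_left)
    finally have e: "(\<Sum>y\<in>{y. 0 < W x y}. W x y * (F x y - c)\<^sup>2) = (\<Sum>y\<in>{y. 0 < W x y}. W x y * (F x y)\<^sup>2) - 2 * c * (\<Sum>y\<in>{y. 0 < W x y}. W x y * F x y) + c\<^sup>2 * (\<Sum>y\<in>{y. 0 < W x y}. W x y * 1)" .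
    show "P x * (\<Sum>y\<in>{y. 0 < W x y}. W x y * (F x y - c)\<^sup>2) = P x * (\<Sum>y\<in>{y. 0 < W x y}. W x y * (F x y)\<^sup>2)
     - 2 * c * (P x * (\<Sum>y\<in>{y. 0 < W x y}. W x y * F x y)) + c\<^sup>2 * (P x * (\<Sum>y\<in>{y. 0 < W x y}. W x y * 1))"
      unfolding e by (simp only: ring_distribs mult.left_commute)
  qed simp
  also have "\<dots> = ES (\<lambda>x y. (F x y)\<^sup>2) - 2 * c * ES F + c\<^sup>2 * ES (\<lambda>x y. 1)"
    unfolding ES_def by (simp add: sum.distrib sum_subtractf sum_distrib_left)
  finally show ?thesis .
qed

lemma disp_eq:
  assumes cap: "mutinf P W = capacity W"
  shows "dispersion P W = psi2 0"
proof -
  define I where "I = mutinf P W"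
  have "dispersion P W = ES (\<lambda>x y. (ln (W x y / q y) - I)\<^sup>2)"
    unfolding dispersion_def ES_def q_def[symmetric]
  proof (rule sum.cong)
    fix x
    show "P x * (\<Sum>y\<in>{y. 0 < W x y}. W x y * (ln (W x y / q y) - relent (W x) q)\<^sup>2) =
          P x * (\<Sum>y\<in>{y. 0 < W x y}. W x y * (ln (W x y / q y) - I)\<^sup>2)"
    proof (cases "0 < P x")
      case True then show ?thesis using kkt[OF cap True] unfolding I_def by simp
    next
      case False then have "P x = 0" using P_nn[of x] by linarith
      then show ?thesis by simp
    qed
  qed simp
  also have "\<dots> = ES (\<lambda>x y. (ln (W x y / q y))\<^sup>2) - 2 * I * I + I\<^sup>2"
    unfolding ES_sq ES_one mutinf_ES[symmetric] I_def by simp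
  also have "\<dots> = psi2 0" unfolding psi2_0 I_def by (simp add: power2_eq_square)
  finally show ?thesis .
qed


end

theorem mainTheorem12:
  fixes W :: "'x::finite \<Rightarrow> 'y::finite \<Rightarrow> real" and P :: "'x \<Rightarrow> real" and R2 :: real
  assumes "channel W" and "input_distr P"
    and "mutinf P W = capacity W"
    and "dispersion P W > 0"
    and "R2 < 0"
  shows "(\<lambda>n::nat. real n * (INF s\<in>{0..1::real}.
            capacity W * s + R2 / sqrt (real n) * s + gallager P W s))
         \<longlonglongrightarrow> - (R2\<^sup>2 / (2 * dispersion P W))"
proof -
  interpret chan P W by unfold_locales (rule assms(1), rule assms(2))
  have dg: "(gallager P W has_real_derivative psi1 s) (at s)" if s: "s > -1" for s
  proof (rule has_field_derivative_transform_within_open[OF d_psi[OF s], of "{-1<..}"])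
    show "open {-1::real<..}" by simp
    show "s \<in> {-1<..}" using s by simp
    show "\<And>x. x \<in> {-1<..} \<Longrightarrow> psi x = gallager P W x" using gal_eq by simp
  qed
  have g0: "gallager P W 0 = 0" using gal_eq[of 0] psi0 by simp
  have g10: "psi1 0 = - capacity W" using psi1_0 assms(3) by simp
  have f20: "psi2 0 = dispersion P W" using disp_eq[OF assms(3)] by simp
  show ?thesis
    by (rule abstract_limit[OF g0 dg d_psi1 psi2_nn g10 f20 assms(4) assms(5)])
qed

end
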